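(* Let $n\in\mathbb{N}$ with $n>1$ and $r:=1/n$. The unique solution $u$ of $D_ru=0$ in $(0,1)$, $u=0$ in $[-r,0]$, $u=1$ in $[1,1+r]$ is discontinuous (it has no continuous representative on $[-r,1+r]$).
   Context: $D_ru(x):=\dfrac{u(x+r)+u(x-r)-2u(x)}{r^2}$; the equation is required a.e. in $(0,1)$ and solutions are identified up to null sets. *)

theory Defs
  imports "HOL-Analysis.Analysis"
begin

definition Dr :: "real \<Rightarrow> (real \<Rightarrow> real) \<Rightarrow> real \<Rightarrow> real" where
  "Dr r u x = (u (x + r) + u (x - r) - 2 * u x) / r ^ 2"

definition is_sol :: "real \<Rightarrow> (real \<Rightarrow> real) \<Rightarrow> bool" where
  "is_sol r u \<longleftrightarrow>
     (AE x in lebesgue. x \<in> {0<..<1} \<longrightarrow> Dr r u x = 0) \<and>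
     (AE x in lebesgue. x \<in> {-r..0} \<longrightarrow> u x = 0) \<and>
     (AE x in lebesgue. x \<in> {1..1+r} \<longrightarrow> u x = 1)"

end

theory Submission
  imports Defs
begin

definition u0 :: "nat \<Rightarrow> real \<Rightarrow> real" where
  "u0 n x = (of_int \<lfloor>x * real n\<rfloor> + 1) / (real n + 1)"

lemma AE_shift:
  fixes c :: real
  assumes "AE x in lebesgue. P x"
  shows "AE x in lebesgue. P (x + c)"
proof -
  obtain N where N: "N \<in> null_sets lebesgue" "{x \<in> space lebesgue. \<not> P x} \<subseteq> N"
    using assms unfolding eventually_ae_filter by blast
  have "(+) (-c) ` N \<in> null_sets lebesgue"
    using N(1) negligible_translation negligible_iff_null_sets by blast
  moreover have "{x \<in> space lebesgue. \<not> P (x + c)} \<subseteq> (+) (-c) ` N"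
  proof
    fix x assume "x \<in> {x \<in> space lebesgue. \<not> P (x + c)}"
    then have "x + c \<in> N" using N(2) by auto
    then show "x \<in> (+) (-c) ` N" by (auto intro!: image_eqI[where x="x+c"])
  qed
  ultimately show ?thesis by (rule AE_I')
qed

lemma AE_neq: "AE x in lebesgue. x \<noteq> (c::real)"
  by (rule AE_completion[OF AE_lborel_singleton])

lemma u0_Dr:
  assumes "n > 0"
  shows "Dr (1/real n) (u0 n) x = 0"
proof -
  have a: "(x + 1/real n) * real n = x * real n + 1" using assms by (simp add: field_simps)
  have b: "(x - 1/real n) * real n = x * real n - 1" using assms by (simp add: field_simps)
  have "u0 n (x + 1/real n) + u0 n (x - 1/real n) - 2 * u0 n x = 0"
    unfolding u0_def a b by (simp add: divide_simps)
  then show ?thesis unfolding Dr_def by simp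
qed

lemma lin_rec:
  fixes b :: "nat \<Rightarrow> real"
  assumes "b 0 = 0" "\<And>m. 1 \<le> m \<Longrightarrow> m \<le> n \<Longrightarrow> b (Suc m) = 2 * b m - b (m - 1)"
  shows "m \<le> n \<Longrightarrow> b m = m * b 1 \<and> b (Suc m) = (m+1) * b 1"
proof (induction m)
  case 0 then show ?case using assms(1) by simp
next
  case (Suc m)
  then have IH: "b m = m * b 1" "b (Suc m) = (m+1) * b 1" by auto
  have "b (Suc (Suc m)) = 2 * b (Suc m) - b m" using assms(2)[of "Suc m"] Suc.prems by simp
  then show ?case using IH by (simp add: algebra_simps)
qed

lemma u0_sol:
  assumes "n > 1"
  shows "is_sol (1/real n) (u0 n)"
proof -
  have n0: "real n > 0" using assms by simp
  have A1: "AE x in lebesgue. x \<in> {0<..<1} \<longrightarrow> Dr (1/real n) (u0 n) x = 0"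
    using u0_Dr[of n] assms by simp
  have A2: "AE x in lebesgue. x \<in> {-(1/real n)..0} \<longrightarrow> u0 n x = 0"
  proof (rule eventually_mono[OF AE_neq[of 0]], intro impI)
    fix x :: real assume "x \<noteq> 0" "x \<in> {-(1/real n)..0}"
    then have "-1 \<le> x * real n" "x * real n < 0" using n0
      by (auto simp: field_simps mult_neg_pos)
    then have "\<lfloor>x * real n\<rfloor> = -1" by (simp add: floor_eq_iff)
    then show "u0 n x = 0" unfolding u0_def by simp
  qed
  have A3: "AE x in lebesgue. x \<in> {1..1 + 1/real n} \<longrightarrow> u0 n x = 1"
  proof (rule eventually_mono[OF AE_neq[of "1 + 1/real n"]], intro impI)
    fix x :: real assume "x \<noteq> 1 + 1/real n" "x \<in> {1..1 + 1/real n}"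
    then have "x < 1 + 1/real n" "1 \<le> x" by auto
    then have "real n \<le> x * real n" "x * real n < real n + 1" using n0
      by (auto simp: field_simps)
    then have "\<lfloor>x * real n\<rfloor> = int n" by (simp add: floor_eq_iff)
    then show "u0 n x = 1" unfolding u0_def using n0 by simp
  qed
  show ?thesis unfolding is_sol_def using A1 A2 A3 by blast
qed


lemma u0_uniq:
  assumes "n > 1" "is_sol (1/real n) u"
  shows "AE x in lebesgue. x \<in> {-(1/real n)..1 + 1/real n} \<longrightarrow> u x = u0 n x"
proof -
  define r where "r = 1 / real n"
  have n0: "real n > 0" using assms by simp
  have rn: "r * real n = 1" using n0 by (simp add: r_def)
  have r0: "r > 0" using n0 by (simp add: r_def)
  have A1: "AE x in lebesgue. x \<in> {0<..<1} \<longrightarrow> Dr r u x = 0"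
   and A2: "AE x in lebesgue. x \<in> {-r..0} \<longrightarrow> u x = 0"
   and A3: "AE x in lebesgue. x \<in> {1..1+r} \<longrightarrow> u x = 1"
    using assms(2) unfolding is_sol_def r_def by auto
  let ?I = "{-(int n+2)..int n+2}"
  have G: "AE x in lebesgue. \<forall>i\<in>?I.
      (x + of_int i * r \<in> {0<..<1} \<longrightarrow> Dr r u (x + of_int i * r) = 0) \<and>
      (x + of_int i * r \<in> {-r..0} \<longrightarrow> u (x + of_int i * r) = 0) \<and>
      (x + of_int i * r \<in> {1..1+r} \<longrightarrow> u (x + of_int i * r) = 1) \<and>
      x \<noteq> - (of_int i * r)"
    apply (rule eventually_ball_finite)
     apply simp
    apply (intro ballI eventually_conj)
    using AE_shift[OF A1] AE_shift[OF A2] AE_shift[OF A3] AE_neq apply auto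
    done
  show ?thesis
  proof (rule eventually_mono[OF G], intro impI)
    fix x assume H: "\<forall>i\<in>?I.
      (x + of_int i * r \<in> {0<..<1} \<longrightarrow> Dr r u (x + of_int i * r) = 0) \<and>
      (x + of_int i * r \<in> {-r..0} \<longrightarrow> u (x + of_int i * r) = 0) \<and>
      (x + of_int i * r \<in> {1..1+r} \<longrightarrow> u (x + of_int i * r) = 1) \<and>
      x \<noteq> - (of_int i * r)"
      and xI: "x \<in> {-(1/real n)..1 + 1/real n}"
    have H1: "\<forall>i\<in>?I. x + of_int i * r \<in> {0<..<1} \<longrightarrow> Dr r u (x + of_int i * r) = 0"
      using H by blast
    have H2: "\<forall>i\<in>?I. x + of_int i * r \<in> {-r..0} \<longrightarrow> u (x + of_int i * r) = 0"
      using H by blast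
    have H3: "\<forall>i\<in>?I. x + of_int i * r \<in> {1..1+r} \<longrightarrow> u (x + of_int i * r) = 1"
      using H by blast
    define k where "k = \<lfloor>x * real n\<rfloor>"
    have xb: "-1 \<le> x * real n" "x * real n \<le> real n + 1"
      using xI n0 by (auto simp: field_simps)
    have kb: "-1 \<le> k" "k \<le> int n + 1" unfolding k_def using xb
      by (simp_all add: le_floor_iff floor_le_iff)
    have "-k \<in> ?I" using kb by auto
    from bspec[OF H this] have "x \<noteq> - (of_int (-k) * r)" by blast
    then have xk: "x * real n \<noteq> of_int k" using rn n0
      by (auto simp: r_def field_simps)
    have kx: "of_int k < x * real n" "x * real n < of_int k + 1"
      using xk unfolding k_def by linarith+
    have kn: "k \<le> int n" using kx xb by linarith
    define a where "a j = u (x + of_int (j - 1 - k) * r)" for j :: int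
    define b where "b m = a (int m)" for m :: nat
    have pn: "(x + of_int i * r) * real n = x * real n + of_int i" for i
      using rn by (simp add: algebra_simps)
    have sc: "a \<le> b" if "a * real n \<le> b * real n" for a b using that n0 by simp
    have sc': "a < b" if "a * real n < b * real n" for a b using that n0 by simp
    have rn': "(-r) * real n = -1" "(1 + r) * real n = real n + 1" using rn by (auto simp: algebra_simps)
    have inI: "i \<in> ?I" if "-(int n+2) \<le> i" "i \<le> int n + 2" for i using that by auto
    have b0: "b 0 = 0"
    proof -
      let ?i = "-1 - k"
      have "(x + of_int ?i * r) * real n \<ge> -1" "(x + of_int ?i * r) * real n \<le> 0"
        using pn[of ?i] kx by auto
      then have "x + of_int ?i * r \<in> {-r..0}" using sc[of "-r"] sc[of _ 0] rn' by auto
      moreover have "?i \<in> ?I" using kb kn by auto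
      ultimately have "u (x + of_int ?i * r) = 0" using H2 by blast
      then show ?thesis unfolding b_def a_def by simp
    qed
    have bn: "b (Suc n) = 1"
    proof -
      let ?i = "int n - k"
      have "(x + of_int ?i * r) * real n \<ge> real n" "(x + of_int ?i * r) * real n \<le> real n + 1"
        using pn[of ?i] kx by auto
      then have "x + of_int ?i * r \<in> {1..1+r}" using sc[of 1] sc[of _ "1+r"] rn' by auto
      moreover have "int (Suc n) - 1 - k = ?i" by simp
      moreover have "?i \<in> ?I" using kb kn by auto
      ultimately have "u (x + of_int ?i * r) = 1" using H3 by blast
      then show ?thesis unfolding b_def a_def by simp
    qed
    have brec: "b (Suc m) = 2 * b m - b (m - 1)" if m: "1 \<le> m" "m \<le> n" for m
    proof -
      define i where "i = int m - 1 - k"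
      have oi: "real_of_int i = real m - 1 - real_of_int k" unfolding i_def by simp
      have "(x + of_int i * r) * real n = x * real n + real m - 1 - real_of_int k"
        using pn[of i] oi by simp
      moreover have "real m \<ge> 1" "real m \<le> real n" using m by simp_all
      ultimately have q1: "0 * real n < (x + of_int i * r) * real n" and q2: "(x + of_int i * r) * real n < 1 * real n"
        using kx by linarith+
      have "0 < x + of_int i * r" by (rule sc'[OF q1])
      moreover have "x + of_int i * r < 1" by (rule sc'[OF q2])
      ultimately have "x + of_int i * r \<in> {0<..<1}" by simp
      moreover have "-(int n + 2) \<le> i" "i \<le> int n + 2" using kb kn m unfolding i_def by linarith+
      then have "i \<in> ?I" by simp
      ultimately have D: "Dr r u (x + of_int i * r) = 0" using H1 by blast
      have ii1: "int (Suc m) - 1 - k = i + 1" unfolding i_def by simp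
      have e1: "x + of_int (int (Suc m) - 1 - k) * r = x + of_int i * r + r"
        unfolding ii1 of_int_add by (simp add: distrib_right)
      have ii: "int (m - 1) - 1 - k = i - 1" using m unfolding i_def by (simp add: of_nat_diff)
      have e2: "x + of_int (int (m - 1) - 1 - k) * r = x + of_int i * r - r"
        unfolding ii of_int_diff by (simp add: left_diff_distrib)
      have e0: "b m = u (x + of_int i * r)" unfolding b_def a_def i_def ..
      from D r0 have "u (x + of_int i * r + r) + u (x + of_int i * r - r) - 2 * u (x + of_int i * r) = 0"
        unfolding Dr_def by simp
      moreover have "b (Suc m) = u (x + of_int i * r + r)" unfolding b_def a_def e1 ..
      moreover have "b (m - 1) = u (x + of_int i * r - r)" unfolding b_def a_def e2 ..
      ultimately show ?thesis using e0 by linarith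
    qed
    have L: "m \<le> n \<Longrightarrow> b m = m * b 1 \<and> b (Suc m) = (m+1) * b 1" for m
      using lin_rec[of b n m] b0 brec by blast
    have "b (Suc n) = (n+1) * b 1" using L[of n] by simp
    then have b1: "b 1 = 1 / (real n + 1)" using bn by (simp add: field_simps)
    have bm: "b m = m / (real n + 1)" if "m \<le> Suc n" for m
    proof (cases "m = Suc n")
      case True then show ?thesis using bn by simp
    next
      case False then show ?thesis using L[of m] that b1 by simp
    qed
    have "u x = b (nat (k + 1))" unfolding b_def a_def using kb by simp
    also have "\<dots> = (of_int k + 1) / (real n + 1)" using bm[of "nat (k+1)"] kb kn by simp
    also have "\<dots> = u0 n x" unfolding u0_def k_def by simp
    finally show "u x = u0 n x" .
  qed
qed


lemma closure_point:
  fixes w :: "real \<Rightarrow> real"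
  assumes w: "continuous_on {lo..hi} w" and ae: "AE x in lebesgue. x \<in> {a<..<b} \<longrightarrow> w x = c"
    and sub: "lo \<le> a" "b \<le> hi" "a < b" and p: "p \<in> {a..b}"
  shows "w p = c"
proof -
  let ?C = "{x \<in> {lo..hi}. w x = c}"
  have cl: "closed ?C" using continuous_closed_preimage_constant[OF w closed_atLeastAtMost] .
  have "x \<in> ?C" if "x \<in> {a<..<b}" for x
  proof (rule mem_closed_if_AE_lebesgue_open[OF _ cl _ that])
    show "open {a<..<b}" by simp
    show "AE x \<in> {a<..<b} in lebesgue. x \<in> ?C"
    proof (rule eventually_mono[OF ae], intro impI)
      fix x assume h: "x \<in> {a<..<b} \<longrightarrow> w x = c" and x: "x \<in> {a<..<b}"
      then have "w x = c" by blast
      moreover have "x \<in> {lo..hi}" using x sub by auto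
      ultimately show "x \<in> ?C" by blast
    qed
  qed
  then have "{a<..<b} \<subseteq> ?C" by blast
  then have "closure {a<..<b} \<subseteq> ?C" using cl by (rule closure_minimal)
  moreover have "closure {a<..<b} = {a..b}" using sub(3) by simp
  ultimately show ?thesis using p by blast
qed

theorem corollary1p11:
  fixes n :: nat
  assumes "n > 1"
  shows "(\<exists>u. is_sol (1 / real n) u) \<and>
         (\<forall>u v. is_sol (1 / real n) u \<longrightarrow> is_sol (1 / real n) v \<longrightarrow>
            (AE x in lebesgue. x \<in> {-(1 / real n)..1 + 1 / real n} \<longrightarrow> u x = v x)) \<and>
         (\<forall>u. is_sol (1 / real n) u \<longrightarrow>
            \<not> (\<exists>w. continuous_on {-(1 / real n)..1 + 1 / real n} w \<and>
                 (AE x in lebesgue. x \<in> {-(1 / real n)..1 + 1 / real n} \<longrightarrow> u x = w x)))"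
proof (intro conjI allI impI)
  show "\<exists>u. is_sol (1 / real n) u" using u0_sol[OF assms] by blast
next
  fix u v assume "is_sol (1 / real n) u" "is_sol (1 / real n) v"
  from u0_uniq[OF assms this(1)] u0_uniq[OF assms this(2)]
  show "AE x in lebesgue. x \<in> {-(1 / real n)..1 + 1 / real n} \<longrightarrow> u x = v x"
    by eventually_elim auto
next
  fix u assume us: "is_sol (1 / real n) u"
  show "\<not> (\<exists>w. continuous_on {-(1 / real n)..1 + 1 / real n} w \<and>
                 (AE x in lebesgue. x \<in> {-(1 / real n)..1 + 1 / real n} \<longrightarrow> u x = w x))"
  proof
    assume "\<exists>w. continuous_on {-(1 / real n)..1 + 1 / real n} w \<and>
                 (AE x in lebesgue. x \<in> {-(1 / real n)..1 + 1 / real n} \<longrightarrow> u x = w x)"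
    then obtain w where wc: "continuous_on {-(1 / real n)..1 + 1 / real n} w"
      and wa: "AE x in lebesgue. x \<in> {-(1 / real n)..1 + 1 / real n} \<longrightarrow> u x = w x" by blast
    have n0: "real n > 0" using assms by simp
    have r0: "1 / real n > 0" using n0 by simp
    have E: "AE x in lebesgue. x \<in> {-(1 / real n)..1 + 1 / real n} \<longrightarrow> u0 n x = w x"
      using u0_uniq[OF assms us] wa by eventually_elim auto
    have L: "AE x in lebesgue. x \<in> {-(1 / real n)<..<0} \<longrightarrow> w x = 0"
      using E
    proof eventually_elim
      case (elim x)
      show ?case
      proof
        assume x: "x \<in> {-(1 / real n)<..<0}"
        then have "-1 < x * real n" "x * real n < 0" using n0
          by (auto simp: field_simps mult_neg_pos)
        then have "\<lfloor>x * real n\<rfloor> = -1" by (simp add: floor_eq_iff)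
        then have "u0 n x = 0" unfolding u0_def by simp
        with elim x r0 show "w x = 0" by auto
      qed
    qed
    have R: "AE x in lebesgue. x \<in> {0<..<1 / real n} \<longrightarrow> w x = 1 / (real n + 1)"
      using E
    proof eventually_elim
      case (elim x)
      show ?case
      proof
        assume x: "x \<in> {0<..<1 / real n}"
        then have "0 < x * real n" "x * real n < 1" using n0
          by (auto simp: field_simps)
        then have "\<lfloor>x * real n\<rfloor> = 0" by (simp add: floor_eq_iff)
        then have "u0 n x = 1 / (real n + 1)" unfolding u0_def by simp
        with elim x r0 show "w x = 1 / (real n + 1)" by auto
      qed
    qed
    have "w 0 = 0"
      by (rule closure_point[OF wc L]) (use r0 in auto)
    moreover have "w 0 = 1 / (real n + 1)"
      by (rule closure_point[OF wc R]) (use r0 in auto)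
    ultimately show False using n0 by simp
  qed
qed

end
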